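(* Let $C\subset\mathbb{R}^2$ be a nonempty compact set such that $U(x,y)\cap C\neq\emptyset$ for all $x,y\in C$ with $x\neq y$, where $U(x,y)=U(x,|x-y|)\cap U(y,|x-y|)$. Then $C$ is connected.
   Context: For $z\in\mathbb{R}^2$ and $r>0$, $U(z,r)$ denotes the open disc with centre $z$ and radius $r$. The set $U(x,y)$ is called the circle pair region of $x$ and $y$. *)

theory Defs
  imports "HOL-Analysis.Analysis"
begin

definition circle_pair_region :: "real^2 \<Rightarrow> real^2 \<Rightarrow> (real^2) set" where
  "circle_pair_region x y = ball x (dist x y) \<inter> ball y (dist x y)"

end

theory Submission
  imports Defs
begin

theorem mainTheorem1:
  fixes C :: "(real^2) set"
  assumes "C \<noteq> {}" and "compact C"
    and "\<And>x y. x \<in> C \<Longrightarrow> y \<in> C \<Longrightarrow> x \<noteq> y \<Longrightarrow> circle_pair_region x y \<inter> C \<noteq> {}"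
  shows "connected C"
proof -
  have cl: "closed C" using assms(2) compact_imp_closed by blast
  show ?thesis
  proof (subst connected_closed_set[OF cl], rule notI, elim exE conjE)
    fix A B assume A: "closed A" and B: "closed B" and An: "A \<noteq> {}" and Bn: "B \<noteq> {}"
      and U: "A \<union> B = C" and I: "A \<inter> B = {}"
    have cA: "compact A" using A assms(2) U compact_Int_closed[of C A] by (metis Int_absorb1 Un_upper1)
    obtain x y where x: "x \<in> A" and y: "y \<in> B" and d: "dist x y = setdist A B"
      using setdist_compact_closed[OF cA B An Bn] by blast
    have xy: "x \<noteq> y" using x y I by blast
    obtain z where z: "z \<in> C" "dist x z < dist x y" "dist y z < dist x y"
    proof -
      from assms(3)[of x y] x y U xy obtain z where "z \<in> circle_pair_region x y" "z \<in> C" by blast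
      then show ?thesis using that unfolding circle_pair_region_def by (simp add: dist_commute)
    qed
    show False
    proof (cases "z \<in> A")
      case True
      then have "setdist A B \<le> dist z y" using y setdist_le_dist by blast
      then show False using z d by (simp add: dist_commute)
    next
      case False
      then have "z \<in> B" using z U by blast
      then have "setdist A B \<le> dist x z" using x setdist_le_dist by blast
      then show False using z d by simp
    qed
  qed
qed

end
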